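(* Every finite nonempty set $A\subseteq S'(n,l)$ has a minimal set of generators; that is, there is a set of generators $G_0$ of $A$ such that $G_0\subseteq G$ for every set of generators $G$ of $A$ (equivalently, the intersection of all sets of generators of $A$ is itself a set of generators of $A$).
   Context: $\mathbb N_n=\{1,\dots,n\}$. $F_n$ denotes the set of functions $f:\mathbb N_n\to[0,1]$ with $\sum_{i=1}^n f(i)=1$. A generalized string of length $l$ over $\mathbb N_n$ is a function $s:\mathbb N_l\to F_n$; the set of these is $S'(n,l)$, and the value of $s$ at $i$ is written $s[i]$. The generalized Hamming distance is $d_{GH}(s,t)=\sum_{i=1}^l\big(1-\sum_{j=1}^n\min\{s[i](j),t[i](j)\}\big)$. For a finite nonempty $\sigma\subseteq S'(n,l)$, its radius is $r(\sigma)=\min\{r\ge0:\exists x\in S'(n,l)\,\forall y\in\sigma\ d_{GH}(x,y)\le r\}$ (this minimum exists), and a center of $\sigma$ is any $c\in S'(n,l)$ with $d_{GH}(c,y)\le r(\sigma)$ for all $y\in\sigma$. For $x\in S'(n,l)$, $r\ge0$: $B(x,r)=\{y:d_{GH}(x,y)\le r\}$, ${\rm int}B(x,r)=\{y:d_{GH}(x,y)<r\}$, ${\rm bd}B(x,r)=\{y:d_{GH}(x,y)=r\}$. $MB(\sigma)=\{B(c,r(\sigma)):c\text{ is a center of }\sigma\}$. For a finite nonempty $A\subseteq S'(n,l)$, a set $G\subseteq A$ is a set of generators of $A$ if there is $B\in MB(A)$ with $G\subseteq{\rm bd}B$ and $A\setminus G\subseteq{\rm int}B$. *)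

theory Defs
  imports "HOL-Analysis.Analysis"
begin

text \<open>F_n: probability vectors on {1..n}, represented extensionally (value 0 off {1..n}).\<close>
definition Fn :: "nat \<Rightarrow> (nat \<Rightarrow> real) set" where
  "Fn n = {f. (\<forall>j\<in>{1..n}. 0 \<le> f j \<and> f j \<le> 1) \<and> (\<Sum>j=1..n. f j) = 1
              \<and> (\<forall>j. j \<notin> {1..n} \<longrightarrow> f j = 0)}"

text \<open>S'(n,l): generalized strings s : {1..l} -> F_n, represented extensionally
  (s i = constant 0 off {1..l}).\<close>
definition gstrings :: "nat \<Rightarrow> nat \<Rightarrow> (nat \<Rightarrow> nat \<Rightarrow> real) set" where
  "gstrings n l = {s. (\<forall>i\<in>{1..l}. s i \<in> Fn n) \<and> (\<forall>i. i \<notin> {1..l} \<longrightarrow> s i = (\<lambda>_. 0))}"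

definition dGH :: "nat \<Rightarrow> nat \<Rightarrow> (nat \<Rightarrow> nat \<Rightarrow> real) \<Rightarrow> (nat \<Rightarrow> nat \<Rightarrow> real) \<Rightarrow> real" where
  "dGH n l s t = (\<Sum>i=1..l. 1 - (\<Sum>j=1..n. min (s i j) (t i j)))"

definition radius :: "nat \<Rightarrow> nat \<Rightarrow> (nat \<Rightarrow> nat \<Rightarrow> real) set \<Rightarrow> real" where
  "radius n l \<sigma> = (LEAST r. r \<ge> 0 \<and> (\<exists>x\<in>gstrings n l. \<forall>y\<in>\<sigma>. dGH n l x y \<le> r))"

definition is_center :: "nat \<Rightarrow> nat \<Rightarrow> (nat \<Rightarrow> nat \<Rightarrow> real) set \<Rightarrow> (nat \<Rightarrow> nat \<Rightarrow> real) \<Rightarrow> bool" where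
  "is_center n l \<sigma> c \<longleftrightarrow> c \<in> gstrings n l \<and> (\<forall>y\<in>\<sigma>. dGH n l c y \<le> radius n l \<sigma>)"

definition gball :: "nat \<Rightarrow> nat \<Rightarrow> (nat \<Rightarrow> nat \<Rightarrow> real) \<Rightarrow> real \<Rightarrow> (nat \<Rightarrow> nat \<Rightarrow> real) set" where
  "gball n l x r = {y\<in>gstrings n l. dGH n l x y \<le> r}"

definition gint :: "nat \<Rightarrow> nat \<Rightarrow> (nat \<Rightarrow> nat \<Rightarrow> real) \<Rightarrow> real \<Rightarrow> (nat \<Rightarrow> nat \<Rightarrow> real) set" where
  "gint n l x r = {y\<in>gstrings n l. dGH n l x y < r}"

definition gbd :: "nat \<Rightarrow> nat \<Rightarrow> (nat \<Rightarrow> nat \<Rightarrow> real) \<Rightarrow> real \<Rightarrow> (nat \<Rightarrow> nat \<Rightarrow> real) set" where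
  "gbd n l x r = {y\<in>gstrings n l. dGH n l x y = r}"

text \<open>MB(\<sigma>), with each ball recorded by its center and radius so that int and bd are determined.\<close>
definition MB :: "nat \<Rightarrow> nat \<Rightarrow> (nat \<Rightarrow> nat \<Rightarrow> real) set \<Rightarrow> ((nat \<Rightarrow> nat \<Rightarrow> real) \<times> real) set" where
  "MB n l \<sigma> = {(c, radius n l \<sigma>) | c. is_center n l \<sigma> c}"

definition is_generators :: "nat \<Rightarrow> nat \<Rightarrow> (nat \<Rightarrow> nat \<Rightarrow> real) set \<Rightarrow> (nat \<Rightarrow> nat \<Rightarrow> real) set \<Rightarrow> bool" where
  "is_generators n l A G \<longleftrightarrow> G \<subseteq> A \<and>
     (\<exists>(c, r)\<in>MB n l A. G \<subseteq> gbd n l c r \<and> A - G \<subseteq> gint n l c r)"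

end

theory Submission imports Defs begin

lemma coord_cont: "continuous_on S (\<lambda>s::nat\<Rightarrow>nat\<Rightarrow>real. s i j)"
proof -
  have "continuous_on UNIV (\<lambda>s::nat\<Rightarrow>nat\<Rightarrow>real. s i)" by simp
  then have "continuous_on UNIV (\<lambda>s::nat\<Rightarrow>nat\<Rightarrow>real. s i j)"
    by (rule continuous_on_product_then_coordinatewise)
  then show ?thesis using continuous_on_subset by blast
qed

lemma gstrings_alt: "gstrings n l = {s. (\<forall>i j. (i\<in>{1..l} \<and> j\<in>{1..n} \<longrightarrow> 0 \<le> s i j) \<and> (i\<in>{1..l} \<and> j\<in>{1..n} \<longrightarrow> s i j \<le> 1) \<and> (\<not>(i\<in>{1..l} \<and> j\<in>{1..n}) \<longrightarrow> s i j = 0)) \<and> (\<forall>i. i\<in>{1..l} \<longrightarrow> (\<Sum>j=1..n. s i j) = 1)}"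
proof (rule set_eqI, rule iffI)
  fix s assume "s \<in> gstrings n l"
  then have a: "\<And>i. i\<in>{1..l} \<Longrightarrow> s i \<in> Fn n" and b: "\<And>i. i \<notin> {1..l} \<Longrightarrow> s i = (\<lambda>_. 0)"
    unfolding gstrings_def by auto
  show "s \<in> {s. (\<forall>i j. (i\<in>{1..l} \<and> j\<in>{1..n} \<longrightarrow> 0 \<le> s i j) \<and> (i\<in>{1..l} \<and> j\<in>{1..n} \<longrightarrow> s i j \<le> 1) \<and> (\<not>(i\<in>{1..l} \<and> j\<in>{1..n}) \<longrightarrow> s i j = 0)) \<and> (\<forall>i. i\<in>{1..l} \<longrightarrow> (\<Sum>j=1..n. s i j) = 1)}"
  proof (intro CollectI conjI allI impI)
    fix i j assume "i\<in>{1..l} \<and> j\<in>{1..n}"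
    then show "0 \<le> s i j" "s i j \<le> 1" using a unfolding Fn_def by auto
  next
    fix i j assume h: "\<not>(i\<in>{1..l} \<and> j\<in>{1..n})"
    show "s i j = 0"
    proof (cases "i\<in>{1..l}")
      case True then show ?thesis using a[OF True] h unfolding Fn_def by auto
    next
      case False then show ?thesis using b[OF False] by simp
    qed
  next
    fix i assume "i\<in>{1..l}" then show "(\<Sum>j=1..n. s i j) = 1" using a unfolding Fn_def by auto
  qed
next
  fix s :: "nat \<Rightarrow> nat \<Rightarrow> real" assume "s \<in> {s. (\<forall>i j. (i\<in>{1..l} \<and> j\<in>{1..n} \<longrightarrow> 0 \<le> s i j) \<and> (i\<in>{1..l} \<and> j\<in>{1..n} \<longrightarrow> s i j \<le> 1) \<and> (\<not>(i\<in>{1..l} \<and> j\<in>{1..n}) \<longrightarrow> s i j = 0)) \<and> (\<forall>i. i\<in>{1..l} \<longrightarrow> (\<Sum>j=1..n. s i j) = 1)}"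
  then have h1: "\<And>i j. i\<in>{1..l} \<Longrightarrow> j\<in>{1..n} \<Longrightarrow> 0 \<le> s i j \<and> s i j \<le> 1"
     and h2: "\<And>i j. \<not>(i\<in>{1..l} \<and> j\<in>{1..n}) \<Longrightarrow> s i j = 0"
     and h3: "\<And>i. i\<in>{1..l} \<Longrightarrow> (\<Sum>j=1..n. s i j) = 1" by auto
  have A: "s i \<in> Fn n" if "i\<in>{1..l}" for i unfolding Fn_def using h1[OF that] h2 h3[OF that] that by blast
  have B: "s i = (\<lambda>_. 0)" if "i \<notin> {1..l}" for i using h2 that by auto
  show "s \<in> gstrings n l" unfolding gstrings_def using A B by blast
qed

lemma closed_gstrings: "closed (gstrings n l)"
  unfolding gstrings_alt
proof (intro closed_Collect_conj closed_Collect_all)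
  fix i j
  have c0: "closed {s::nat\<Rightarrow>nat\<Rightarrow>real. 0 \<le> s i j}"
    by (rule closed_Collect_le[OF continuous_on_const coord_cont])
  have c1: "closed {s::nat\<Rightarrow>nat\<Rightarrow>real. s i j \<le> 1}"
    by (rule closed_Collect_le[OF coord_cont continuous_on_const])
  have c2: "closed {s::nat\<Rightarrow>nat\<Rightarrow>real. s i j = 0}"
    by (rule closed_Collect_eq[OF coord_cont continuous_on_const])
  show "closed {s::nat\<Rightarrow>nat\<Rightarrow>real. i\<in>{1..l} \<and> j\<in>{1..n} \<longrightarrow> 0 \<le> s i j}"
    proof (cases "i\<in>{1..l} \<and> j\<in>{1..n}")
      case True then show ?thesis using c0 by (simp only: True simp_thms)
    next
      case False then show ?thesis by (simp only: False simp_thms) simp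
    qed
  show "closed {s::nat\<Rightarrow>nat\<Rightarrow>real. i\<in>{1..l} \<and> j\<in>{1..n} \<longrightarrow> s i j \<le> 1}"
    proof (cases "i\<in>{1..l} \<and> j\<in>{1..n}")
      case True then show ?thesis using c1 by (simp only: True simp_thms)
    next
      case False then show ?thesis by (simp only: False simp_thms) simp
    qed
  show "closed {s::nat\<Rightarrow>nat\<Rightarrow>real. \<not>(i\<in>{1..l} \<and> j\<in>{1..n}) \<longrightarrow> s i j = 0}"
    proof (cases "i\<in>{1..l} \<and> j\<in>{1..n}")
      case True then show ?thesis by (simp only: True simp_thms) simp
    next
      case False then show ?thesis using c2 by (simp only: False simp_thms)
    qed
next
  fix i
  have "continuous_on UNIV (\<lambda>s::nat\<Rightarrow>nat\<Rightarrow>real. \<Sum>j=1..n. s i j)"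
    by (rule continuous_on_sum) (rule coord_cont)
  then have c3: "closed {s::nat\<Rightarrow>nat\<Rightarrow>real. (\<Sum>j=1..n. s i j) = 1}"
    by (rule closed_Collect_eq[OF _ continuous_on_const])
  show "closed {s::nat\<Rightarrow>nat\<Rightarrow>real. i\<in>{1..l} \<longrightarrow> (\<Sum>j=1..n. s i j) = 1}"
    proof (cases "i\<in>{1..l}")
      case True then show ?thesis using c3 by (simp only: True simp_thms)
    next
      case False then show ?thesis by (simp only: False simp_thms) simp
    qed
qed


lemma compact_box: "compact (PiE UNIV (\<lambda>i::nat. PiE UNIV (\<lambda>j::nat. {0..1::real})))"
proof -
  have c1: "compact (PiE UNIV (\<lambda>j::nat. {0..1::real}))"
    using compactin_PiE[of "\<lambda>_. euclidean" UNIV "\<lambda>j::nat. {0..1::real}"]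
    by (simp add: euclidean_product_topology)
  show ?thesis
    using compactin_PiE[of "\<lambda>_. euclidean" UNIV "\<lambda>i::nat. PiE UNIV (\<lambda>j::nat. {0..1::real})"] c1
    by (simp add: euclidean_product_topology)
qed

lemma gstrings_01: "s \<in> gstrings n l \<Longrightarrow> s i j \<in> {0..1}"
proof -
  assume "s \<in> gstrings n l"
  then have h: "(i\<in>{1..l} \<and> j\<in>{1..n} \<longrightarrow> 0 \<le> s i j) \<and> (i\<in>{1..l} \<and> j\<in>{1..n} \<longrightarrow> s i j \<le> 1) \<and> (\<not>(i\<in>{1..l} \<and> j\<in>{1..n}) \<longrightarrow> s i j = 0)"
    unfolding gstrings_alt by blast
  then show "s i j \<in> {0..1}" by (cases "i\<in>{1..l} \<and> j\<in>{1..n}") auto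
qed

lemma compact_gstrings: "compact (gstrings n l)"
proof -
  have "gstrings n l \<subseteq> PiE UNIV (\<lambda>i::nat. PiE UNIV (\<lambda>j::nat. {0..1::real}))"
    using gstrings_01 by (auto simp: PiE_UNIV_domain)
  then have eq: "PiE UNIV (\<lambda>i::nat. PiE UNIV (\<lambda>j::nat. {0..1::real})) \<inter> gstrings n l = gstrings n l" by blast
  from compact_Int_closed[OF compact_box closed_gstrings[of n l]] show ?thesis by (simp only: eq)
qed

lemma dGH_cont: "continuous_on S (\<lambda>x. dGH n l x y)"
  unfolding dGH_def by (intro continuous_intros coord_cont)

lemma Max_cont:
  assumes "finite B" "B \<noteq> {}"
  shows "continuous_on S (\<lambda>x. Max ((\<lambda>y. dGH n l x y) ` B))"
  using assms
proof (induction B rule: finite_ne_induct)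
  case (singleton y) then show ?case by (simp add: dGH_cont)
next
  case (insert y F)
  have "(\<lambda>x. Max ((\<lambda>y. dGH n l x y) ` insert y F)) = (\<lambda>x. max (dGH n l x y) (Max ((\<lambda>y. dGH n l x y) ` F)))"
    using insert by (simp add: Max_insert)
  then show ?case using insert by (simp add: continuous_on_max dGH_cont)
qed

lemma dGH_nonneg:
  assumes "x \<in> gstrings n l" "y \<in> gstrings n l"
  shows "0 \<le> dGH n l x y"
  unfolding dGH_def
proof (rule sum_nonneg)
  fix i assume i: "i \<in> {1..l}"
  have "(\<Sum>j=1..n. min (x i j) (y i j)) \<le> (\<Sum>j=1..n. y i j)" by (rule sum_mono) simp
  also have "\<dots> = 1" using assms(2) i unfolding gstrings_def Fn_def by auto
  finally show "0 \<le> 1 - (\<Sum>j=1..n. min (x i j) (y i j))" by simp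
qed

lemma center_exists:
  assumes "finite A" "A \<noteq> {}" "A \<subseteq> gstrings n l"
  shows "\<exists>c. is_center n l A c"
proof -
  define f where "f = (\<lambda>x. Max ((\<lambda>y. dGH n l x y) ` A))"
  have "continuous_on (gstrings n l) f" unfolding f_def using assms by (intro Max_cont)
  moreover have "gstrings n l \<noteq> {}" using assms by blast
  ultimately obtain x0 where x0: "x0 \<in> gstrings n l" "\<And>x. x \<in> gstrings n l \<Longrightarrow> f x0 \<le> f x"
    using continuous_attains_inf[OF compact_gstrings] by blast
  have le: "\<forall>y\<in>A. dGH n l x0 y \<le> f x0" unfolding f_def using assms(1) by auto
  obtain y0 where "y0 \<in> A" using assms by blast
  then have "0 \<le> f x0" using le dGH_nonneg[OF x0(1)] assms(3) by (meson order_trans subsetD)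
  have rad: "radius n l A = f x0"
    unfolding radius_def
  proof (rule Least_equality)
    show "0 \<le> f x0 \<and> (\<exists>x\<in>gstrings n l. \<forall>y\<in>A. dGH n l x y \<le> f x0)"
      using \<open>0 \<le> f x0\<close> le x0(1) by blast
  next
    fix r assume "0 \<le> r \<and> (\<exists>x\<in>gstrings n l. \<forall>y\<in>A. dGH n l x y \<le> r)"
    then obtain x where x: "x \<in> gstrings n l" "\<forall>y\<in>A. dGH n l x y \<le> r" by blast
    have "f x \<le> r" unfolding f_def using x(2) assms(1,2) by simp
    then show "f x0 \<le> r" using x0(2)[OF x(1)] by simp
  qed
  show ?thesis unfolding is_center_def using rad le x0(1) by auto
qed

lemma min_avg:
  fixes a :: "'a \<Rightarrow> real"
  assumes "finite I" "I \<noteq> {}"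
  shows "(\<Sum>g\<in>I. min (a g) b) / card I \<le> min ((\<Sum>g\<in>I. a g) / card I) b"
proof -
  have k: "real (card I) > 0" using assms by (simp add: card_gt_0_iff)
  have 1: "(\<Sum>g\<in>I. min (a g) b) \<le> (\<Sum>g\<in>I. a g)" by (rule sum_mono) simp
  have "(\<Sum>g\<in>I. min (a g) b) \<le> (\<Sum>g\<in>I. b)" by (rule sum_mono) simp
  then have 2: "(\<Sum>g\<in>I. min (a g) b) \<le> card I * b" by simp
  show ?thesis using 1 2 k by (simp add: divide_right_mono pos_divide_le_eq mult.commute)
qed

lemma dGH_avg:
  assumes "finite I" "I \<noteq> {}"
  shows "dGH n l (\<lambda>i j. (\<Sum>g\<in>I. C g i j) / card I) y \<le> (\<Sum>g\<in>I. dGH n l (C g) y) / card I"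
proof -
  have k: "real (card I) > 0" using assms by (simp add: card_gt_0_iff)
  have row: "1 - (\<Sum>j=1..n. min ((\<Sum>g\<in>I. C g i j) / card I) (y i j))
     \<le> (\<Sum>g\<in>I. 1 - (\<Sum>j=1..n. min (C g i j) (y i j))) / card I" for i
  proof -
    have "(\<Sum>g\<in>I. \<Sum>j=1..n. min (C g i j) (y i j)) / card I
        = (\<Sum>j=1..n. (\<Sum>g\<in>I. min (C g i j) (y i j)) / card I)"
      by (simp add: sum_divide_distrib sum.swap[of _ I])
    also have "\<dots> \<le> (\<Sum>j=1..n. min ((\<Sum>g\<in>I. C g i j) / card I) (y i j))"
      by (rule sum_mono) (rule min_avg[OF assms])
    finally have *: "(\<Sum>g\<in>I. \<Sum>j=1..n. min (C g i j) (y i j)) / card I \<le> (\<Sum>j=1..n. min ((\<Sum>g\<in>I. C g i j) / card I) (y i j))" .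
    have "(\<Sum>g\<in>I. 1 - (\<Sum>j=1..n. min (C g i j) (y i j))) / card I
        = 1 - (\<Sum>g\<in>I. \<Sum>j=1..n. min (C g i j) (y i j)) / card I"
      using k by (simp add: sum_subtractf diff_divide_distrib)
    then show ?thesis using * by linarith
  qed
  have "dGH n l (\<lambda>i j. (\<Sum>g\<in>I. C g i j) / card I) y
     \<le> (\<Sum>i=1..l. (\<Sum>g\<in>I. 1 - (\<Sum>j=1..n. min (C g i j) (y i j))) / card I)"
    unfolding dGH_def by (rule sum_mono) (rule row)
  also have "\<dots> = (\<Sum>i=1..l. \<Sum>g\<in>I. 1 - (\<Sum>j=1..n. min (C g i j) (y i j))) / card I"
    by (simp only: sum_divide_distrib)
  also have "\<dots> = (\<Sum>g\<in>I. \<Sum>i=1..l. 1 - (\<Sum>j=1..n. min (C g i j) (y i j))) / card I"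
    by (rule arg_cong[of _ _ "\<lambda>z. z / real (card I)"]) (rule sum.swap)
  also have "\<dots> = (\<Sum>g\<in>I. dGH n l (C g) y) / card I"
    unfolding dGH_def ..
  finally show ?thesis .
qed

lemma gstrings_avg:
  assumes "finite I" "I \<noteq> {}" "\<And>g. g \<in> I \<Longrightarrow> C g \<in> gstrings n l"
  shows "(\<lambda>i j. (\<Sum>g\<in>I. C g i j) / card I) \<in> gstrings n l"
proof -
  have k: "real (card I) > 0" using assms by (simp add: card_gt_0_iff)
  have G: "\<And>g. g \<in> I \<Longrightarrow> (\<forall>i j. (i\<in>{1..l} \<and> j\<in>{1..n} \<longrightarrow> 0 \<le> C g i j) \<and> (i\<in>{1..l} \<and> j\<in>{1..n} \<longrightarrow> C g i j \<le> 1) \<and> (\<not>(i\<in>{1..l} \<and> j\<in>{1..n}) \<longrightarrow> C g i j = 0)) \<and> (\<forall>i. i\<in>{1..l} \<longrightarrow> (\<Sum>j=1..n. C g i j) = 1)"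
    using assms(3) unfolding gstrings_alt by blast
  show ?thesis unfolding gstrings_alt
  proof (intro CollectI conjI allI impI)
    fix i j assume ij: "i\<in>{1..l} \<and> j\<in>{1..n}"
    show "0 \<le> (\<Sum>g\<in>I. C g i j) / card I" using G ij by (intro divide_nonneg_nonneg sum_nonneg) auto
    have "(\<Sum>g\<in>I. C g i j) \<le> (\<Sum>g\<in>I. 1)" using G ij by (intro sum_mono) auto
    then show "(\<Sum>g\<in>I. C g i j) / card I \<le> 1" using k by simp
  next
    fix i j assume ij: "\<not>(i\<in>{1..l} \<and> j\<in>{1..n})"
    show "(\<Sum>g\<in>I. C g i j) / card I = 0" using G ij by simp
  next
    fix i assume i: "i\<in>{1..l}"
    have "(\<Sum>j=1..n. (\<Sum>g\<in>I. C g i j) / card I) = (\<Sum>g\<in>I. \<Sum>j=1..n. C g i j) / card I"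
      by (simp add: sum_divide_distrib sum.swap[of _ I])
    also have "\<dots> = (\<Sum>g\<in>I. 1) / card I" using G i by simp
    also have "\<dots> = 1" using k by simp
    finally show "(\<Sum>j=1..n. (\<Sum>g\<in>I. C g i j) / card I) = 1" .
  qed
qed


theorem mainTheorem3:
  fixes n l :: nat and A :: "(nat \<Rightarrow> nat \<Rightarrow> real) set"
  assumes "finite A" and "A \<noteq> {}" and "A \<subseteq> gstrings n l"
  shows "\<exists>G0. is_generators n l A G0 \<and> (\<forall>G. is_generators n l A G \<longrightarrow> G0 \<subseteq> G)"
proof -
  define r where "r = radius n l A"
  define gen where "gen = (\<lambda>c. {y\<in>A. dGH n l c y = r})"
  have gen_ok: "is_generators n l A (gen c)" if "is_center n l A c" for c
  proof -
    have "(c, r) \<in> MB n l A" using that unfolding MB_def r_def by blast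
    moreover have "gen c \<subseteq> gbd n l c r" using assms(3) unfolding gen_def gbd_def by auto
    moreover have "A - gen c \<subseteq> gint n l c r"
      using assms(3) that unfolding gen_def gint_def is_center_def r_def by force
    ultimately show ?thesis unfolding is_generators_def gen_def by blast
  qed
  define GG where "GG = {G. is_generators n l A G}"
  have finGG: "finite GG"
    by (rule finite_subset[of _ "Pow A"]) (auto simp: GG_def is_generators_def assms(1))
  obtain c0 where "is_center n l A c0" using center_exists[OF assms] by blast
  then have neGG: "GG \<noteq> {}" using gen_ok unfolding GG_def by blast
  define P where "P = (\<lambda>G c. is_center n l A c \<and> G \<subseteq> gbd n l c r \<and> A - G \<subseteq> gint n l c r)"
  define cen where "cen = (\<lambda>G. SOME c. P G c)"
  have cenP: "P G (cen G)" if "G \<in> GG" for G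
  proof -
    have "\<exists>c. P G c" using that unfolding GG_def is_generators_def MB_def P_def r_def by blast
    then show ?thesis unfolding cen_def by (rule someI_ex)
  qed
  define c where "c = (\<lambda>i j. (\<Sum>G\<in>GG. cen G i j) / card GG)"
  have k: "real (card GG) > 0" using finGG neGG by (simp add: card_gt_0_iff)
  have c_in: "c \<in> gstrings n l" unfolding c_def
    by (rule gstrings_avg[OF finGG neGG]) (use cenP in \<open>auto simp: P_def is_center_def\<close>)
  have avg: "dGH n l c y \<le> (\<Sum>G\<in>GG. dGH n l (cen G) y) / card GG" for y
    unfolding c_def by (rule dGH_avg[OF finGG neGG])
  have each: "dGH n l (cen G) y \<le> r" if "G \<in> GG" "y \<in> A" for G y
    using cenP[OF that(1)] that(2) unfolding P_def is_center_def r_def by blast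
  have cc: "is_center n l A c"
    unfolding is_center_def
  proof (intro conjI ballI c_in)
    fix y assume y: "y \<in> A"
    have "(\<Sum>G\<in>GG. dGH n l (cen G) y) \<le> (\<Sum>G\<in>GG. r)" using each y by (intro sum_mono) auto
    then have "(\<Sum>G\<in>GG. dGH n l (cen G) y) / card GG \<le> r" using k by (simp add: pos_divide_le_eq mult.commute)
    then show "dGH n l c y \<le> radius n l A" using avg[of y] unfolding r_def by linarith
  qed
  have minimal: "gen c \<subseteq> G" if "G \<in> GG" for G
  proof
    fix y assume y: "y \<in> gen c"
    show "y \<in> G"
    proof (rule ccontr)
      assume "y \<notin> G"
      then have "y \<in> A - G" using y unfolding gen_def by auto
      then have lt: "dGH n l (cen G) y < r" using cenP[OF that] unfolding P_def gint_def by auto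
      have "(\<Sum>G\<in>GG. dGH n l (cen G) y) < (\<Sum>G\<in>GG. r)"
        using each y lt that finGG unfolding gen_def
        by (intro sum_strict_mono_ex1) auto
      then have "(\<Sum>G\<in>GG. dGH n l (cen G) y) / card GG < r" using k by (simp add: pos_divide_less_eq mult.commute)
      then have "dGH n l c y < r" using avg[of y] by linarith
      then show False using y unfolding gen_def by auto
    qed
  qed
  show ?thesis using gen_ok[OF cc] minimal unfolding GG_def by blast
qed

end
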